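(* There is an absolute constant $c>0$ such that the following holds. Let $d\ge2$, let $G$ be any $d$-regular graph on $n$ vertices, let $F$ be regular, and let $p=F^{-1}(1-1/d)\cdot(1-1/d)^{d}$. Then $$\inf_{\mathbf{T}\in\mathcal{N}_{p\cdot\mathbf{1}}}\mathcal{R}(p\cdot\mathbf{1},\mathbf{T})\ \ge\ c\cdot\sup_{p'>0}\ \inf_{\mathbf{T}\in\mathcal{N}_{p'\cdot\mathbf{1}}}\mathcal{R}(p'\cdot\mathbf{1},\mathbf{T}).$$ (Note that $p$ depends only on $d$ and $F$, not on the structure of $G$.)
   Context: Public-goods pricing game: $n$ buyers are the vertices of an undirected graph $G=([n],E)$; $N(i)=\{j:(i,j)\in E\}$ (so $i\notin N(i)$); $G$ is $d$-regular if $|N(i)|=d$ for all $i$. Values i.i.d. with cumulative distribution function $F$ on $[0,\infty)$, $F(\infty)=1$. An equilibrium for price vector $\mathbf{p}$ is $\mathbf{T}\in[0,\infty]^n$ (buyer $i$ purchases iff $v_i\ge T_i$) with $T_i=p_i/\prod_{j\in N(i)}F(T_j)$ for all $i$ (convention $c/0=\infty$); $\mathcal{N}_{\mathbf{p}}$ is the set of equilibria; $\mathcal{R}(\mathbf{p},\mathbf{T})=\sum_ip_i(1-F(T_i))$; $p\cdot\mathbf{1}$ is the uniform price vector. $F$ is regular: atomless, supported on an interval in $[0,\infty)$ with positive density $f$ there, and $\phi(x)=x-\frac{1-F(x)}{f(x)}$ non-decreasing. $F^{-1}(q)=\min\{x:F(x)=q\}$. *)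

theory Defs
  imports "HOL-Analysis.Analysis"
begin

definition graph_on :: "nat \<Rightarrow> (nat \<Rightarrow> nat \<Rightarrow> bool) \<Rightarrow> bool" where
  "graph_on n E \<longleftrightarrow> (\<forall>i j. E i j \<longrightarrow> i < n \<and> j < n) \<and> (\<forall>i j. E i j \<longrightarrow> E j i) \<and> (\<forall>i. \<not> E i i)"

definition nbhd :: "nat \<Rightarrow> (nat \<Rightarrow> nat \<Rightarrow> bool) \<Rightarrow> nat \<Rightarrow> nat set" where
  "nbhd n E i = {j. j < n \<and> E i j}"

definition d_regular :: "nat \<Rightarrow> (nat \<Rightarrow> nat \<Rightarrow> bool) \<Rightarrow> nat \<Rightarrow> bool" where
  "d_regular n E d \<longleftrightarrow> (\<forall>i<n. card (nbhd n E i) = d)"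

(* Regular distribution: CDF F, density f, support interval I *)
definition regular_dist :: "(real \<Rightarrow> real) \<Rightarrow> (real \<Rightarrow> real) \<Rightarrow> real set \<Rightarrow> bool" where
  "regular_dist F f I \<longleftrightarrow>
     is_interval I \<and> I \<subseteq> {0..} \<and> interior I \<noteq> {} \<and>
     mono F \<and> continuous_on UNIV F \<and> (F \<longlongrightarrow> 1) at_top \<and>
     (\<forall>x. (\<forall>y\<in>I. x < y) \<longrightarrow> F x = 0) \<and>
     (\<forall>x. (\<forall>y\<in>I. y < x) \<longrightarrow> F x = 1) \<and>
     (\<forall>x\<in>interior I. (F has_real_derivative f x) (at x) \<and> f x > 0) \<and>
     mono_on (interior I) (\<lambda>x. x - (1 - F x) / f x)"

definition Fe :: "(real \<Rightarrow> real) \<Rightarrow> ereal \<Rightarrow> real" where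
  "Fe F t = (case t of ereal x \<Rightarrow> F x | PInfty \<Rightarrow> 1 | MInfty \<Rightarrow> 0)"

definition Finv :: "(real \<Rightarrow> real) \<Rightarrow> real \<Rightarrow> real" where
  "Finv F q = (LEAST x. F x = q)"

definition equilibria :: "nat \<Rightarrow> (nat \<Rightarrow> nat \<Rightarrow> bool) \<Rightarrow> (real \<Rightarrow> real) \<Rightarrow> (nat \<Rightarrow> real) \<Rightarrow> (nat \<Rightarrow> ereal) set" where
  "equilibria n E F p = {T. \<forall>i<n. 0 \<le> T i \<and>
      T i = (let q = (\<Prod>j\<in>nbhd n E i. Fe F (T j)) in
             if q = 0 then PInfty else ereal (p i / q))}"

definition revenue :: "nat \<Rightarrow> (real \<Rightarrow> real) \<Rightarrow> (nat \<Rightarrow> real) \<Rightarrow> (nat \<Rightarrow> ereal) \<Rightarrow> real" where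
  "revenue n F p T = (\<Sum>i<n. p i * (1 - Fe F (T i)))"

definition worst_rev :: "nat \<Rightarrow> (nat \<Rightarrow> nat \<Rightarrow> bool) \<Rightarrow> (real \<Rightarrow> real) \<Rightarrow> real \<Rightarrow> ereal" where
  "worst_rev n E F p = (INF T\<in>equilibria n E F (\<lambda>_. p). ereal (revenue n F (\<lambda>_. p) T))"

end

theory Submission imports Defs begin

lemma rd_basic:
  assumes "regular_dist F f I"
  shows "is_interval I" "I \<subseteq> {0..}" "mono F" "\<And>x. isCont F x" "(F \<longlongrightarrow> 1) at_top"
    "\<And>x. x < 0 \<Longrightarrow> F x = 0"
    "\<And>x. (\<forall>y\<in>I. y < x) \<Longrightarrow> F x = 1"
    "\<And>x. (\<forall>y\<in>I. x < y) \<Longrightarrow> F x = 0"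
    "\<And>x. x \<in> interior I \<Longrightarrow> (F has_real_derivative f x) (at x) \<and> f x > 0"
    "mono_on (interior I) (\<lambda>x. x - (1 - F x) / f x)"
proof -
  note A = assms[unfolded regular_dist_def]
  show "is_interval I" "I \<subseteq> {0..}" "mono F" "(F \<longlongrightarrow> 1) at_top"
    "\<And>x. (\<forall>y\<in>I. y < x) \<Longrightarrow> F x = 1"
    "\<And>x. (\<forall>y\<in>I. x < y) \<Longrightarrow> F x = 0"
    "\<And>x. x \<in> interior I \<Longrightarrow> (F has_real_derivative f x) (at x) \<and> f x > 0"
    "mono_on (interior I) (\<lambda>x. x - (1 - F x) / f x)" using A by auto
  show "\<And>x. isCont F x" using A by (metis continuous_on_interior interior_UNIV UNIV_I)
  fix x :: real assume "x < 0"
  then have "\<forall>y\<in>I. x < y" using A by force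
  then show "F x = 0" using A by auto
qed

lemma rd_big:
  assumes "regular_dist F f I" "r < 1"
  shows "\<exists>M. \<forall>x\<ge>M. F x > r"
proof -
  have "eventually (\<lambda>x. F x > r) at_top"
    using order_tendstoD(1)[OF rd_basic(5)[OF assms(1)] assms(2)] .
  then show ?thesis by (simp add: eventually_at_top_linorder)
qed

lemma rd_le1:
  assumes "regular_dist F f I" shows "F x \<le> 1"
proof (rule ccontr)
  assume "\<not> F x \<le> 1"
  have "eventually (\<lambda>y. F y < F x) at_top"
    using order_tendstoD(2)[OF rd_basic(5)[OF assms(1)]] \<open>\<not> F x \<le> 1\<close> by auto
  then obtain M where M: "\<forall>y\<ge>M. F y < F x" by (auto simp: eventually_at_top_linorder)
  have "F x \<le> F (max x M)" using rd_basic(3)[OF assms] by (simp add: monoD)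
  then show False using M by (metis max.cobounded2 not_le)
qed

lemma rd_ge0:
  assumes "regular_dist F f I" shows "F x \<ge> 0"
proof (cases "x < 0")
  case True then show ?thesis using rd_basic(6)[OF assms] by simp
next
  case False
  then have "F (-1) \<le> F x" using rd_basic(3)[OF assms] by (simp add: monoD)
  then show ?thesis using rd_basic(6)[OF assms, of "-1"] by simp
qed

lemma rd_ivt:
  assumes "regular_dist F f I" "F a \<le> e" "e \<le> F b" "a \<le> b"
  shows "\<exists>s\<ge>a. s \<le> b \<and> F s = e"
  using IVT[of F a e b] rd_basic(4)[OF assms(1)] assms by auto

lemma rd_int:
  assumes R: "regular_dist F f I" and x: "0 < F x" "F x < 1"
  shows "x \<in> interior I"
proof -
  note B = rd_basic[OF R]
  obtain s1 where s1: "s1 \<ge> -1" "s1 \<le> x" "F s1 = F x / 2"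
    using rd_ivt[OF R, of "-1" "F x / 2" x] B(6)[of "-1"] B(6)[of x] x by (cases "x < -1") auto
  have s1x: "s1 < x" using s1 x by (cases "s1 = x") auto
  obtain M where M: "\<forall>y\<ge>M. F y > (1 + F x)/2" using rd_big[OF R, of "(1 + F x)/2"] x by auto
  obtain s2 where s2: "s2 \<ge> x" "s2 \<le> max x M" "F s2 = (1 + F x)/2"
  proof -
    have "(1 + F x) / 2 \<le> F (max x M)" using M by (meson less_imp_le max.cobounded2)
    moreover have "F x \<le> (1 + F x)/2" using x by simp
    ultimately obtain s where "s \<ge> x" "s \<le> max x M" "F s = (1 + F x)/2"
      using rd_ivt[OF R, of x "(1 + F x)/2" "max x M"] by (meson max.cobounded1)
    then show ?thesis using that by blast
  qed
  have s2x: "x < s2" using s2 x by (cases "s2 = x") auto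
  obtain y1 where y1: "y1 \<in> I" "y1 \<le> s1"
  proof -
    have "\<not> (\<forall>y\<in>I. s1 < y)" using B(8)[of s1] s1 x by auto
    then show ?thesis using that by (auto simp: not_less)
  qed
  obtain y2 where y2: "y2 \<in> I" "s2 \<le> y2"
  proof -
    have "\<not> (\<forall>y\<in>I. y < s2)" using B(7)[of s2] s2 x by auto
    then show ?thesis using that by (auto simp: not_less)
  qed
  have sub: "{s1<..<s2} \<subseteq> I"
    using B(1) y1 y2 unfolding is_interval_1 by (smt (verit) greaterThanLessThan_iff subsetI)
  have "{s1<..<s2} \<subseteq> interior I" by (rule interior_maximal[OF sub]) auto
  then show ?thesis using s1x s2x by auto
qed

lemma rd_key:
  assumes R: "regular_dist F f I" and x0: "x0 \<in> interior I"
  shows "F x0 * (1 - F x0) \<le> x0 * f x0"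
proof (rule ccontr)
  note B = rd_basic[OF R]
  assume neg: "\<not> ?thesis"
  have x0pos: "x0 \<ge> 0" using x0 interior_subset B(2) by fastforce
  have f0: "f x0 > 0" using B(9)[OF x0] by auto
  have F01: "0 \<le> F x0" "F x0 \<le> 1" using rd_ge0[OF R] rd_le1[OF R] by auto
  have F0lt: "F x0 < 1"
  proof (rule ccontr)
    assume "\<not> F x0 < 1" then have "F x0 = 1" using F01 by auto
    then show False using neg x0pos f0 by simp
  qed
  have F0gt: "F x0 > 0"
  proof (rule ccontr)
    assume "\<not> F x0 > 0" then have "F x0 = 0" using F01 by auto
    then show False using neg x0pos f0 by simp
  qed
  define k where "k = (1 - F x0) / f x0 - x0"
  have kf: "k * f x0 = (1 - F x0) - x0 * f x0" using f0 unfolding k_def by (simp add: field_simps)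
  have "(1 - F x0) - x0 * f x0 > (1 - F x0) - F x0 * (1 - F x0)" using neg by simp
  moreover have "(1 - F x0) - F x0 * (1 - F x0) = (1 - F x0) * (1 - F x0)" by (simp add: algebra_simps)
  moreover have "(1 - F x0) * (1 - F x0) > 0" using F0lt by simp
  ultimately have "k * f x0 > 0" using kf by simp
  then have kpos: "k > 0" using f0 by (simp add: zero_less_mult_iff)
  define V where "V = (1 - F x0) * (x0 + k)"
  have main: "(1 - e) * k \<le> V" if e: "0 < e" "e < F x0" for e
  proof -
    obtain s where s: "s \<ge> -1" "s \<le> x0" "F s = e"
      using rd_ivt[OF R, of "-1" e x0] B(6)[of "-1"] e x0pos by auto
    have sI: "s \<in> interior I" using rd_int[OF R] s e F0lt by auto
    have spos: "s \<ge> 0" using sI interior_subset B(2) by fastforce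
    have "(\<lambda>y. (1 - F y) * (y + k)) s \<le> (\<lambda>y. (1 - F y) * (y + k)) x0"
    proof (rule DERIV_nonneg_imp_nondecreasing[OF s(2)])
      fix y assume y: "s \<le> y" "y \<le> x0"
      have "F s \<le> F y" "F y \<le> F x0" using y B(3) by (auto simp: monoD)
      then have yI: "y \<in> interior I" using rd_int[OF R] s e F0lt by auto
      have D: "(F has_real_derivative f y) (at y)" "f y > 0" using B(9)[OF yI] by auto
      have "y - (1 - F y) / f y \<le> x0 - (1 - F x0) / f x0"
        using B(10) yI x0 y(2) by (simp add: mono_on_def)
      then have "y + k \<le> (1 - F y) / f y" unfolding k_def by simp
      then have "(y + k) * f y \<le> 1 - F y" using D(2) by (simp add: le_divide_eq)
      moreover have d1: "((\<lambda>y. 1 - F y) has_real_derivative 0 - f y) (at y)"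
        by (rule DERIV_diff[OF DERIV_const D(1)])
      have d2: "((\<lambda>y. y + k) has_real_derivative 1 + 0) (at y)"
        by (rule DERIV_add[OF DERIV_ident DERIV_const])
      have "((\<lambda>y. (1 - F y) * (y + k)) has_real_derivative (0 - f y) * (y + k) + (1 + 0) * (1 - F y)) (at y)"
        by (rule DERIV_mult[OF d1 d2])
      ultimately show "\<exists>d. ((\<lambda>y. (1 - F y) * (y + k)) has_real_derivative d) (at y) \<and> 0 \<le> d"
        by (intro exI[of _ "(0 - f y) * (y + k) + (1 + 0) * (1 - F y)"]) (auto simp: algebra_simps)
    qed
    then have "(1 - e) * (s + k) \<le> V" using s unfolding V_def by simp
    moreover have "(1 - e) * k \<le> (1 - e) * (s + k)" using spos e F0lt by (intro mult_left_mono) auto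
    ultimately show ?thesis by linarith
  qed
  have kV: "k \<le> V"
  proof (rule ccontr)
    assume "\<not> k \<le> V"
    define e where "e = min (F x0 / 2) ((k - V) / (2 * k))"
    have e: "0 < e" "e < F x0" using F0gt kpos \<open>\<not> k \<le> V\<close> unfolding e_def by auto
    have "e \<le> (k - V) / (2 * k)" unfolding e_def by simp
    then have "e * k \<le> (k - V) / (2 * k) * k" using kpos by (intro mult_right_mono) auto
    also have "\<dots> = (k - V) / 2" using kpos by simp
    finally have "e * k \<le> (k - V) / 2" .
    then show False using main[OF e] \<open>\<not> k \<le> V\<close> by (simp add: algebra_simps)
  qed
  then have "F x0 * k \<le> (1 - F x0) * x0" unfolding V_def by (simp add: algebra_simps)
  then have "F x0 * k * f x0 \<le> (1 - F x0) * x0 * f x0" using f0 by (simp add: mult_right_mono)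
  moreover have "F x0 * k * f x0 = F x0 * (1 - F x0) - F x0 * x0 * f x0"
  proof -
    have "F x0 * k * f x0 = F x0 * (k * f x0)" by simp
    also have "\<dots> = F x0 * ((1 - F x0) - x0 * f x0)" using kf by simp
    finally show ?thesis by (simp add: algebra_simps)
  qed
  ultimately have "F x0 * (1 - F x0) \<le> x0 * f x0" by (simp add: algebra_simps)
  then show False using neg by simp
qed

lemma rd_g:
  assumes R: "regular_dist F f I" and at: "a \<le> t" and Fa: "0 < F a" and Ft: "F t < 1"
  shows "t * (1 - F t) * F a \<le> a * (1 - F a) * F t"
proof -
  note B = rd_basic[OF R]
  have "(\<lambda>y. y * (1 - F y) / F y) t \<le> (\<lambda>y. y * (1 - F y) / F y) a"
  proof (rule DERIV_nonpos_imp_nonincreasing[OF at])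
    fix y assume y: "a \<le> y" "y \<le> t"
    have Fy: "F a \<le> F y" "F y \<le> F t" using y B(3) by (auto simp: monoD)
    then have yI: "y \<in> interior I" using rd_int[OF R] Fa Ft by auto
    have D: "(F has_real_derivative f y) (at y)" "f y > 0" using B(9)[OF yI] by auto
    have key: "F y * (1 - F y) \<le> y * f y" by (rule rd_key[OF R yI])
    have d1: "((\<lambda>y. 1 - F y) has_real_derivative 0 - f y) (at y)"
      by (rule DERIV_diff[OF DERIV_const D(1)])
    have d2: "((\<lambda>y. y * (1 - F y)) has_real_derivative 1 * (1 - F y) + (0 - f y) * y) (at y)"
      by (rule DERIV_mult[OF DERIV_ident d1])
    have Fy0: "F y \<noteq> 0" using Fy Fa by auto
    have d3: "((\<lambda>y. y * (1 - F y) / F y) has_real_derivative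
       ((1 * (1 - F y) + (0 - f y) * y) * F y - y * (1 - F y) * f y) / (F y * F y)) (at y)"
      by (rule DERIV_divide[OF d2 D(1) Fy0])
    have "(1 * (1 - F y) + (0 - f y) * y) * F y - y * (1 - F y) * f y = F y * (1 - F y) - y * f y"
      by (simp add: algebra_simps)
    then have "((1 * (1 - F y) + (0 - f y) * y) * F y - y * (1 - F y) * f y) / (F y * F y) \<le> 0"
      using key by (simp add: divide_nonpos_nonneg)
    then show "\<exists>d. ((\<lambda>y. y * (1 - F y) / F y) has_real_derivative d) (at y) \<and> d \<le> 0"
      using d3 by blast
  qed
  moreover have "F t > 0" using Fa at B(3) by (smt (verit) monoD)
  ultimately have "t * (1 - F t) / F t \<le> a * (1 - F a) / F a" by simp
  then show ?thesis using Fa \<open>F t > 0\<close> by (simp add: field_simps)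
qed

lemma rd_Finv:
  assumes R: "regular_dist F f I" and q: "0 < q" "q < 1"
  shows "F (Finv F q) = q" "Finv F q > 0"
proof -
  note B = rd_basic[OF R]
  obtain M where M: "\<forall>x\<ge>M. F x > q" using rd_big[OF R q(2)] by blast
  obtain s where s: "F s = q"
  proof -
    have "q \<le> F (max (-1) M)" using M by (meson less_imp_le max.cobounded2)
    moreover have "F (-1) \<le> q" using B(6)[of "-1"] q by simp
    moreover have "(-1::real) \<le> max (-1) M" by simp
    ultimately obtain s where "F s = q" using rd_ivt[OF R, of "-1" q "max (-1) M"] by blast
    then show ?thesis using that by blast
  qed
  let ?S = "{x. F x = q}"
  have ne: "?S \<noteq> {}" using s by auto
  have bdd: "bdd_below ?S"
  proof
    fix x assume "x \<in> ?S" then show "0 \<le> x" using B(6)[of x] q by (cases "x < 0") auto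
  qed
  have cl: "closed ?S"
    using continuous_closed_preimage_constant[of UNIV F q] B(4)
    by (simp add: continuous_at_imp_continuous_on)
  have inS: "Inf ?S \<in> ?S" by (rule closed_contains_Inf[OF ne bdd cl])
  have "Finv F q = Inf ?S" unfolding Finv_def
  proof (rule Least_equality)
    show "F (Inf ?S) = q" using inS by simp
    fix y assume "F y = q" then show "Inf ?S \<le> y" using bdd by (intro cInf_lower) auto
  qed
  then show F: "F (Finv F q) = q" using inS by simp
  show "Finv F q > 0"
  proof (rule ccontr)
    assume "\<not> Finv F q > 0"
    then have "Finv F q \<le> 0" by simp
    then have "F (Finv F q) \<le> F 0" using B(3) by (simp add: monoD)
    moreover have "F 0 = 0"
    proof -
      have "(F \<longlongrightarrow> F 0) (at_left 0)" using B(4)[of 0]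
        by (simp add: isCont_def filterlim_at_split)
      moreover have "eventually (\<lambda>x. F x = 0) (at_left (0::real))"
        using B(6) eventually_at_left_real[of "-1" 0] by (auto elim: eventually_mono)
      ultimately have "((\<lambda>x. 0) \<longlongrightarrow> F 0) (at_left (0::real))"
        by (rule Lim_transform_eventually)
      moreover have "((\<lambda>x. 0) \<longlongrightarrow> (0::real)) (at_left (0::real))" by simp
      ultimately show ?thesis using tendsto_unique[OF trivial_limit_at_left_real] by metis
    qed
    ultimately show False using F q by simp
  qed
qed

lemma pw_bound:
  fixes a :: real assumes "0 \<le> a" "a \<le> 1"
  shows "real d * (a ^ d * (1 - a)) \<le> 1"
proof -
  have "real d * a ^ d \<le> (\<Sum>k<d. a ^ k)"
  proof -
    have "(\<Sum>k<d. a ^ d) \<le> (\<Sum>k<d. a ^ k)"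
      by (intro sum_mono power_decreasing) (use assms in auto)
    then show ?thesis by simp
  qed
  then have "real d * a ^ d * (1 - a) \<le> (\<Sum>k<d. a ^ k) * (1 - a)"
    using assms by (intro mult_right_mono) auto
  also have "\<dots> = 1 - a ^ d" by (simp add: one_diff_power_eq mult.commute)
  also have "\<dots> \<le> 1" using assms by simp
  finally show ?thesis by (simp add: mult.assoc)
qed

lemma qd_le:
  assumes "d \<ge> (2::nat)" shows "(1 - 1 / real d) ^ d \<le> 1/2"
proof -
  have "1 - 1 / real d \<le> exp (- (1 / real d))" using exp_ge_add_one_self[of "- (1 / real d)"] by simp
  then have "(1 - 1 / real d) ^ d \<le> exp (- (1 / real d)) ^ d"
    using assms by (intro power_mono) (auto simp: field_simps)
  also have "\<dots> = exp (- 1)" using assms by (simp add: exp_of_nat_mult[symmetric])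
  also have "\<dots> \<le> 1/2"
  proof -
    have "2 \<le> exp (1::real)" using exp_ge_add_one_self[of 1] by simp
    then show ?thesis by (simp add: exp_minus field_simps)
  qed
  finally show ?thesis .
qed

lemma qd_ge:
  assumes "d \<ge> (2::nat)" shows "(1 - 1 / real d) ^ d \<ge> 1/9"
proof -
  have d1: "real d - 1 > 0" using assms by simp
  have "1 / (1 - 1 / real d) = 1 + 1 / (real d - 1)" using d1 by (simp add: field_simps)
  also have "\<dots> \<le> exp (1 / (real d - 1))" by (rule exp_ge_add_one_self)
  finally have "(1 / (1 - 1 / real d)) ^ d \<le> exp (1 / (real d - 1)) ^ d"
    using assms d1 by (intro power_mono) (auto simp: field_simps)
  also have "\<dots> = exp (real d / (real d - 1))"
    by (simp add: exp_of_nat_mult[symmetric])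
  also have "\<dots> \<le> exp 2" using d1 assms by (simp add: field_simps)
  also have "\<dots> = exp 1 ^ 2" by (simp add: exp_of_nat_mult[symmetric])
  also have "\<dots> \<le> 3 ^ 2" using exp_le by (intro power_mono) auto
  finally have "1 / (1 - 1 / real d) ^ d \<le> 9" by (simp add: power_divide)
  moreover have "(1 - 1 / real d) ^ d > 0" using assms by (simp add: field_simps)
  ultimately show ?thesis by (simp add: field_simps)
qed

lemma weier:
  fixes a :: "nat \<Rightarrow> real"
  assumes "finite A" "\<forall>j\<in>A. 0 \<le> a j \<and> a j \<le> 1"
  shows "(\<Prod>j\<in>A. a j) \<ge> 1 - (\<Sum>j\<in>A. 1 - a j)"
  using assms
proof (induction A rule: finite_induct)
  case empty then show ?case by simp
next
  case (insert x A)
  then have IH: "(\<Prod>j\<in>A. a j) \<ge> 1 - (\<Sum>j\<in>A. 1 - a j)" and ax: "0 \<le> a x" "a x \<le> 1" by auto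
  have S0: "(\<Sum>j\<in>A. 1 - a j) \<ge> 0" using insert by (intro sum_nonneg) auto
  have "a x * (\<Prod>j\<in>A. a j) \<ge> a x * (1 - (\<Sum>j\<in>A. 1 - a j))"
    using IH ax by (intro mult_left_mono) auto
  moreover have "a x * (1 - (\<Sum>j\<in>A. 1 - a j)) \<ge> 1 - ((1 - a x) + (\<Sum>j\<in>A. 1 - a j))"
  proof -
    have "a x * (\<Sum>j\<in>A. 1 - a j) \<le> (\<Sum>j\<in>A. 1 - a j)" using ax S0 by (simp add: mult_left_le_one_le)
    then show ?thesis by (simp add: algebra_simps)
  qed
  ultimately show ?case using insert by simp
qed

lemma Fe_bounds:
  assumes R: "regular_dist F f I" shows "0 \<le> Fe F t" "Fe F t \<le> 1"
  using rd_ge0[OF R] rd_le1[OF R] by (cases t; simp add: Fe_def)+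

lemma double_count:
  fixes h :: "nat \<Rightarrow> real"
  assumes G: "graph_on n E" and D: "d_regular n E d"
  shows "(\<Sum>i<n. \<Sum>j\<in>nbhd n E i. h j) = real d * (\<Sum>j<n. h j)"
proof -
  have sym: "E i j = E j i" for i j using G unfolding graph_on_def by blast
  have "(\<Sum>i<n. \<Sum>j\<in>nbhd n E i. h j) = (\<Sum>i<n. \<Sum>j<n. if E i j then h j else 0)"
  proof (rule sum.cong[OF refl])
    fix i
    have "nbhd n E i = {j\<in>{..<n}. E i j}" by (auto simp: nbhd_def)
    then show "(\<Sum>j\<in>nbhd n E i. h j) = (\<Sum>j<n. if E i j then h j else 0)"
      using sum.inter_filter[of "{..<n}" h "E i"] by simp
  qed
  also have "\<dots> = (\<Sum>j<n. \<Sum>i<n. if E i j then h j else 0)" by (rule sum.swap)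
  also have "\<dots> = (\<Sum>j<n. real d * h j)"
  proof (rule sum.cong[OF refl])
    fix j assume j: "j \<in> {..<n}"
    have "(\<Sum>i<n. if E i j then h j else 0) = (\<Sum>i\<in>nbhd n E j. h j)"
    proof -
      have "nbhd n E j = {i\<in>{..<n}. E i j}" by (auto simp: nbhd_def sym)
      then show ?thesis using sum.inter_filter[of "{..<n}" "\<lambda>_. h j" "\<lambda>i. E i j"] by simp
    qed
    also have "\<dots> = real (card (nbhd n E j)) * h j" by simp
    also have "\<dots> = real d * h j" using D j unfolding d_regular_def by simp
    finally show "(\<Sum>i<n. if E i j then h j else 0) = real d * h j" .
  qed
  also have "\<dots> = real d * (\<Sum>j<n. h j)" by (simp add: sum_distrib_left)
  finally show ?thesis .
qed

lemma lower_bound: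
  assumes G: "graph_on n E" and D: "d_regular n E d" and d2: "d \<ge> 2" and R: "regular_dist F f I"
    and xs: "xs = Finv F (1 - 1 / real d)" and p: "p = xs * (1 - 1 / real d) ^ d"
    and T: "T \<in> equilibria n E F (\<lambda>_. p)"
  shows "revenue n F (\<lambda>_. p) T \<ge> p * real n / (4 * real d)"
proof -
  define q where "q = 1 - 1 / real d"
  have q: "0 < q" "q < 1" using d2 unfolding q_def by auto
  have Fxs: "F xs = q" and xspos: "xs > 0" using rd_Finv[OF R q] xs q_def by auto
  have qd: "q ^ d \<le> 1/2" "q ^ d > 0" using qd_le[OF d2] q unfolding q_def by auto
  have dpos: "real d > 0" using d2 by simp
  define a where "a i = Fe F (T i)" for i
  have a01: "0 \<le> a i" "a i \<le> 1" for i using Fe_bounds[OF R] unfolding a_def by auto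
  have eq: "0 \<le> T i \<and> T i = (if (\<Prod>j\<in>nbhd n E i. a j) = 0 then PInfty
              else ereal (p / (\<Prod>j\<in>nbhd n E i. a j)))" if "i < n" for i
    using T that unfolding equilibria_def a_def Let_def by auto
  have per: "(1 - a i) + (\<Sum>j\<in>nbhd n E i. 1 - a j) / real d \<ge> 1 / (2 * real d)" if i: "i < n" for i
  proof (cases "a i \<le> q")
    case True
    then have "1 - a i \<ge> 1 / real d" unfolding q_def by simp
    moreover have "(\<Sum>j\<in>nbhd n E i. 1 - a j) / real d \<ge> 0" using a01 dpos by (intro divide_nonneg_pos sum_nonneg) auto
    moreover have "1 / real d \<ge> 1 / (2 * real d)" using dpos by (simp add: field_simps)
    ultimately show ?thesis by linarith
  next
    case False
    define P where "P = (\<Prod>j\<in>nbhd n E i. a j)"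
    have Pnn: "P \<ge> 0" unfolding P_def using a01 by (intro prod_nonneg) auto
    have Plt: "P < q ^ d"
    proof (cases "P = 0")
      case True then show ?thesis using qd by simp
    next
      case False
      then have Ti: "T i = ereal (p / P)" using eq[OF i] unfolding P_def by simp
      have "F (p / P) > q" using \<open>\<not> a i \<le> q\<close> unfolding a_def Ti Fe_def by simp
      then have "p / P > xs" using Fxs rd_basic(3)[OF R] by (metis monoD not_le)
      then have "p > xs * P" using Pnn False by (simp add: field_simps)
      then show ?thesis using xspos p q_def by simp
    qed
    have "P \<ge> 1 - (\<Sum>j\<in>nbhd n E i. 1 - a j)" unfolding P_def
      by (rule weier) (auto simp: nbhd_def a01)
    then have "(\<Sum>j\<in>nbhd n E i. 1 - a j) \<ge> 1/2" using Plt qd by linarith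
    then have "(\<Sum>j\<in>nbhd n E i. 1 - a j) / real d \<ge> 1 / (2 * real d)" using dpos
      by (simp add: field_simps)
    moreover have "1 - a i \<ge> 0" using a01 by simp
    ultimately show ?thesis by linarith
  qed
  have "(\<Sum>i<n. 1 / (2 * real d)) \<le> (\<Sum>i<n. (1 - a i) + (\<Sum>j\<in>nbhd n E i. 1 - a j) / real d)"
    using per by (intro sum_mono) auto
  also have "\<dots> = (\<Sum>i<n. 1 - a i) + (\<Sum>i<n. \<Sum>j\<in>nbhd n E i. 1 - a j) / real d"
    by (simp add: sum.distrib sum_divide_distrib)
  also have "\<dots> = 2 * (\<Sum>i<n. 1 - a i)"
    using double_count[OF G D, of "\<lambda>j. 1 - a j"] dpos by simp
  finally have S: "(\<Sum>i<n. 1 - a i) \<ge> real n / (4 * real d)" using dpos by (simp add: field_simps)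
  have ppos: "p \<ge> 0" using xspos qd p q_def by simp
  have "revenue n F (\<lambda>_. p) T = p * (\<Sum>i<n. 1 - a i)"
    unfolding revenue_def a_def by (simp add: sum_distrib_left)
  also have "\<dots> \<ge> p * (real n / (4 * real d))" using S ppos by (intro mult_left_mono) auto
  finally show ?thesis by simp
qed

lemma upper_bound:
  assumes G: "graph_on n E" and D: "d_regular n E d" and d2: "d \<ge> 2" and R: "regular_dist F f I"
    and xs: "xs = Finv F (1 - 1 / real d)" and p': "p' > 0"
  shows "worst_rev n E F p' \<le> ereal (real n * (2 * xs / real d))"
proof -
  define q where "q = 1 - 1 / real d"
  have q: "0 < q" "q < 1" "q \<ge> 1/2" using d2 unfolding q_def by (auto simp: field_simps)
  have Fxs: "F xs = q" and xspos: "xs > 0" using rd_Finv[OF R] q xs q_def by auto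
  have dpos: "real d > 0" using d2 by simp
  note B = rd_basic[OF R]
  obtain M where M: "\<forall>x\<ge>M. F x > 1/2" using rd_big[OF R, of "1/2"] by auto
  define b where "b = max M (p' * 2 ^ d)"
  have bpos: "b \<ge> 0" unfolding b_def using p' by (simp add: le_max_iff_disj)
  have Fb: "F b \<ge> 1/2" using M unfolding b_def by (meson less_imp_le max.cobounded1)
  have "(1/2::real) ^ d \<le> F b ^ d" using Fb by (intro power_mono) auto
  then have "b * (1/2) ^ d \<le> b * F b ^ d" using bpos by (intro mult_left_mono) auto
  moreover have "p' \<le> b * (1/2) ^ d" unfolding b_def by (simp add: field_simps le_max_iff_disj)
  ultimately have hb: "p' \<le> b * F b ^ d" by linarith
  obtain t where t: "t \<ge> 0" "t \<le> b" "t * F t ^ d = p'"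
    using IVT[of "\<lambda>t. t * F t ^ d" 0 p' b] hb bpos p' B(4) by (auto intro!: continuous_intros)
  have Ft0: "F t ^ d \<noteq> 0" using t p' by (metis less_irrefl mult_zero_right)
  define T where "T = (\<lambda>_::nat. ereal t)"
  have prodT: "(\<Prod>j\<in>nbhd n E i. Fe F (T j)) = F t ^ d" if "i < n" for i
    using D that unfolding T_def d_regular_def Fe_def by simp
  have "T \<in> equilibria n E F (\<lambda>_. p')"
    unfolding equilibria_def Let_def using prodT Ft0 t by (auto simp: T_def)
  then have "worst_rev n E F p' \<le> ereal (revenue n F (\<lambda>_. p') T)"
    unfolding worst_rev_def by (rule INF_lower)
  also have "revenue n F (\<lambda>_. p') T = real n * (t * (F t ^ d * (1 - F t)))"
    unfolding revenue_def T_def Fe_def using t by (simp add: algebra_simps)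
  also have "t * (F t ^ d * (1 - F t)) \<le> 2 * xs / real d"
  proof (cases "t \<le> xs")
    case True
    have F01: "0 \<le> F t" "F t \<le> 1" using rd_ge0[OF R] rd_le1[OF R] by auto
    have "real d * (F t ^ d * (1 - F t)) \<le> 1" by (rule pw_bound[OF F01])
    then have h: "F t ^ d * (1 - F t) \<le> 1 / real d" using dpos by (simp add: field_simps)
    have "t * (F t ^ d * (1 - F t)) \<le> xs * (1 / real d)"
      using True t(1) h F01 by (intro mult_mono) auto
    also have "\<dots> \<le> 2 * xs / real d" using xspos dpos by (simp add: field_simps)
    finally show ?thesis .
  next
    case False
    have F01: "0 \<le> F t" "F t \<le> 1" using rd_ge0[OF R] rd_le1[OF R] by auto
    show ?thesis
    proof (cases "F t = 1")
      case True then show ?thesis using xspos dpos by simp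
    next
      case Fne: False
      then have Flt: "F t < 1" using F01 by simp
      have g: "t * (1 - F t) * q \<le> xs * (1 - q) * F t"
        using rd_g[OF R, of xs t] False Flt Fxs q by simp
      have "1 - q = 1 / real d" unfolding q_def by simp
      then have g2: "t * (1 - F t) * q \<le> xs * F t / real d" using g by simp
      have "t * (1 - F t) \<le> (xs * F t / real d) / q" using g2 by (simp only: pos_le_divide_eq[OF q(1)])
      also have "\<dots> = xs * F t / (real d * q)" by simp
      finally have "t * (1 - F t) \<le> xs * F t / (real d * q)" .
      also have "\<dots> \<le> xs / (real d * q)" using F01 xspos dpos q by (simp add: divide_right_mono)
      also have "\<dots> \<le> 2 * xs / real d" using xspos dpos q by (simp add: field_simps)
      finally have A: "t * (1 - F t) \<le> 2 * xs / real d" .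
      have "t * (F t ^ d * (1 - F t)) = F t ^ d * (t * (1 - F t))" by simp
      also have "\<dots> \<le> 1 * (t * (1 - F t))"
        using F01 t(1) Flt by (intro mult_right_mono) (auto simp: power_le_one)
      finally show ?thesis using A by simp
    qed
  qed
  then have "real n * (t * (F t ^ d * (1 - F t))) \<le> real n * (2 * xs / real d)"
    by (intro mult_left_mono) auto
  finally show ?thesis by simp
qed

theorem theorem4p1:
  shows "\<exists>c::real. c > 0 \<and>
    (\<forall>(n::nat) (d::nat) E F f I.
       d \<ge> 2 \<longrightarrow> graph_on n E \<longrightarrow> d_regular n E d \<longrightarrow> regular_dist F f I \<longrightarrow>
       (let p = Finv F (1 - 1 / real d) * (1 - 1 / real d) ^ d in
        worst_rev n E F p \<ge> ereal c * (SUP p'\<in>{0<..}. worst_rev n E F p')))"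
proof (intro exI[of _ "1/72"] conjI allI impI)
  show "(0::real) < 1/72" by simp
  fix n d E F f I
  assume d2: "d \<ge> (2::nat)" and G: "graph_on n E" and D: "d_regular n E d" and R: "regular_dist F f I"
  define xs where "xs = Finv F (1 - 1 / real d)"
  define p where "p = xs * (1 - 1 / real d) ^ d"
  have q: "0 < 1 - 1 / real d" "1 - 1 / real d < 1" using d2 by auto
  have xspos: "xs > 0" using rd_Finv(2)[OF R q] xs_def by simp
  have dpos: "real d > 0" using d2 by simp
  have L: "ereal (p * real n / (4 * real d)) \<le> worst_rev n E F p"
    unfolding worst_rev_def
    by (rule INF_greatest) (use lower_bound[OF G D d2 R xs_def p_def] in auto)
  have U: "(SUP p'\<in>{0<..}. worst_rev n E F p') \<le> ereal (real n * (2 * xs / real d))"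
    by (rule SUP_least) (use upper_bound[OF G D d2 R xs_def] in auto)
  have "ereal (1/72) * (SUP p'\<in>{0<..}. worst_rev n E F p') \<le> ereal (1/72) * ereal (real n * (2 * xs / real d))"
    using U by (rule ereal_mult_left_mono) simp
  also have "\<dots> = ereal (real n * xs / (36 * real d))" by simp
  also have "\<dots> \<le> ereal (p * real n / (4 * real d))"
  proof -
    have "(1 - 1 / real d) ^ d \<ge> 1/9" by (rule qd_ge[OF d2])
    then have "xs * (1/9) \<le> p" unfolding p_def using xspos by (intro mult_left_mono) auto
    then have "real n * (xs * (1/9)) \<le> real n * p" by (intro mult_left_mono) auto
    then have "real n * xs / 36 \<le> p * real n / 4" by (simp add: field_simps)
    then have "real n * xs / 36 / real d \<le> p * real n / 4 / real d" using dpos by (intro divide_right_mono) auto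
    then show ?thesis by (simp add: divide_divide_eq_left)
  qed
  also have "\<dots> \<le> worst_rev n E F p" by (rule L)
  finally show "let p = Finv F (1 - 1 / real d) * (1 - 1 / real d) ^ d in
        worst_rev n E F p \<ge> ereal (1/72) * (SUP p'\<in>{0<..}. worst_rev n E F p')"
    unfolding Let_def p_def xs_def .
qed

end
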